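(* Let $M$ satisfy the strong spectral gap assumption and let $\alpha$ be a good time-change function on $M$ with constant $C_\alpha$. There exists $\eta\in(0,1/4)$ such that for every $\omega>0$ there exist a set $Y\subset M$ with $\mu(Y)\ge1-\omega$ and a constant $m\ge1$ such that for all $x\in Y$ and all $t\ge m$, \[|\xi(x,t)-t|\le C_\alpha^{-4}t^{1-\eta},\qquad |w(x,t)-t|\le C_\alpha^{-4}t^{1-\eta}.\]
   Context: $G$ connected semisimple linear Lie group, $\Gamma$ lattice, $M=\Gamma\backslash G$ with Haar probability $\mu$; $\mathbf u^t=\exp(tU)$ a unipotent one-parameter subgroup. Strong spectral gap: the regular representation of $G$ on $L^2(M)$ restricted to each noncompact simple factor is isolated from the trivial one (Fell topology); this gives a Sobolev norm $\mathcal S$ (with $\sup|f|\le\mathcal S(f)$) and $C,\tilde\eta>0$ with $|\langle f\circ\phi^t,g\rangle|\le C\mathcal S(f)\mathcal S(g)t^{-\tilde\eta}$, $t\ge1$, for zero-average $f,g$, where $\phi^t(x)=x\mathbf u^t$. A good time-change function is a measurable $\alpha\colon M\to\mathbb R_{>0}$ with $C_\alpha:=\sup_M\max\{\alpha,\alpha^{-1}\}<\infty$ (and we take $C_\alpha>1$), $\int\alpha\,d\mu=1$, $\mathcal S(\alpha)<\infty$. Set $\xi(x,t)=\int_0^t\alpha(x\mathbf u^r)\,dr$ and let $w(x,\cdot)$ be the inverse function of $\xi(x,\cdot)$. *)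

theory Defs
  imports "HOL-Probability.Probability"
begin

text \<open>Abstract rendering of the setting: the homogeneous space
  M = Gamma\G with Haar probability mu is modelled by a probability space
  (a measure M), the unipotent flow x \<mapsto> x u^t by a measurable,
  measure preserving real flow phi, and the strong spectral gap assumption by
  its quantitative consequence (polynomial decay of correlations w.r.t. a
  Sobolev norm S).\<close>

definition xi :: "(real \<Rightarrow> 'a \<Rightarrow> 'a) \<Rightarrow> ('a \<Rightarrow> real) \<Rightarrow> 'a \<Rightarrow> real \<Rightarrow> real" where
  "xi phi alpha x t = (LBINT r=0..t. alpha (phi r x))"

definition w_inv :: "(real \<Rightarrow> 'a \<Rightarrow> 'a) \<Rightarrow> ('a \<Rightarrow> real) \<Rightarrow> 'a \<Rightarrow> real \<Rightarrow> real" where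
  "w_inv phi alpha x s = (THE t. xi phi alpha x t = s)"

definition C_alpha :: "'a measure \<Rightarrow> ('a \<Rightarrow> real) \<Rightarrow> real" where
  "C_alpha M alpha = (SUP x\<in>space M. max (alpha x) (1 / alpha x))"

end

theory Submission
  imports Defs
begin


locale tc =
  fixes M :: "'a measure" and phi :: "real \<Rightarrow> 'a \<Rightarrow> 'a" and alpha :: "'a \<Rightarrow> real" and K :: real
  assumes prob: "prob_space M"
    and flow_meas: "(\<lambda>(x, t). phi t x) \<in> measurable (M \<Otimes>\<^sub>M lborel) M"
    and flow_pres: "\<And>t. phi t \<in> M \<rightarrow>\<^sub>M M \<and> distr M M (phi t) = M"
    and flow_add: "\<And>s t x. x \<in> space M \<Longrightarrow> phi (s + t) x = phi t (phi s x)"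
    and alpha_meas: "alpha \<in> borel_measurable M"
    and K_gt: "K > 1"
    and alpha_le: "\<And>x. x \<in> space M \<Longrightarrow> alpha x \<le> K"
    and alpha_ge: "\<And>x. x \<in> space M \<Longrightarrow> 1 / K \<le> alpha x"
begin

lemma phi_meas: "phi t \<in> M \<rightarrow>\<^sub>M M"
  using flow_pres[of t] by (rule conjunct1)

lemma phi_distr: "distr M M (phi t) = M"
  using flow_pres[of t] by (rule conjunct2)

lemma phi_space: "x \<in> space M \<Longrightarrow> phi t x \<in> space M"
  by (rule measurable_space[OF phi_meas])

lemma joint_meas: "(\<lambda>(x, r). alpha (phi r x)) \<in> borel_measurable (M \<Otimes>\<^sub>M lborel)"
proof -
  have "(\<lambda>p. alpha ((\<lambda>(x, t). phi t x) p)) \<in> borel_measurable (M \<Otimes>\<^sub>M lborel)"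
    by (rule measurable_compose[OF flow_meas alpha_meas])
  then show ?thesis by (simp add: case_prod_beta')
qed

lemma r_meas: assumes "x \<in> space M" shows "(\<lambda>r. alpha (phi r x)) \<in> borel_measurable lborel"
proof -
  have "(\<lambda>r. (x, r)) \<in> measurable lborel (M \<Otimes>\<^sub>M lborel)"
    using assms by (rule measurable_Pair1')
  from measurable_compose[OF this joint_meas] show ?thesis by simp
qed

lemma a_bounds: "x \<in> space M \<Longrightarrow> 1/K \<le> alpha (phi r x) \<and> alpha (phi r x) \<le> K"
  using phi_space alpha_le alpha_ge by blast

lemma set_int: assumes "x \<in> space M" shows "set_integrable lborel {a<..b} (\<lambda>r. alpha (phi r x))"
  unfolding set_integrable_def
proof (rule integrableI_bounded_set_indicator[where B=K])
  show "emeasure lborel {a<..b} < \<infinity>" by (cases "a \<le> b") auto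
  show "AE r in lborel. r \<in> {a<..b} \<longrightarrow> norm (alpha (phi r x)) \<le> K"
  proof (rule AE_I2, safe)
    fix r have "1/K \<le> alpha (phi r x)" "alpha (phi r x) \<le> K" using a_bounds[OF assms] by auto
    moreover have "0 < 1/K" using K_gt by simp
    ultimately have "0 < alpha (phi r x)" by linarith
    then show "norm (alpha (phi r x)) \<le> K" using \<open>alpha (phi r x) \<le> K\<close> by simp
  qed
qed (use assms r_meas in auto)

lemma set_int_const: "set_integrable lborel {(a::real)<..b} (\<lambda>_. c::real)"
  unfolding set_integrable_def
proof (rule integrableI_bounded_set_indicator[where B="\<bar>c\<bar>"])
  show "emeasure lborel {a<..b} < \<infinity>" by (cases "a \<le> b") auto
qed auto

lemma set_integral_const_Ioc: "(a::real) \<le> b \<Longrightarrow> (LBINT r:{a<..b}. (c::real)) = c * (b - a)"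
  by (subst set_integral_const) auto

definition J where "J x a b = (LBINT r:{a<..b}. alpha (phi r x))"

lemma xi_J: "0 \<le> t \<Longrightarrow> xi phi alpha x t = J x 0 t"
  unfolding xi_def J_def using interval_integral_Ioc[of 0 t] by (simp add: zero_ereal_def)

lemma J_split: assumes "x \<in> space M" "a \<le> b" "b \<le> c" shows "J x a c = J x a b + J x b c"
proof -
  have e: "{a<..c} = {a<..b} \<union> {b<..c}" using assms by auto
  have "(LBINT r:{a<..b} \<union> {b<..c}. alpha (phi r x)) = (LBINT r:{a<..b}. alpha (phi r x)) + (LBINT r:{b<..c}. alpha (phi r x))"
    by (rule set_integral_Un) (auto intro: set_int assms(1))
  then show ?thesis unfolding J_def e .
qed

lemma J_shift: assumes "x \<in> space M" shows "J x a b = J (phi a x) 0 (b - a)"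
proof -
  have "J x a b = (\<integral>r. indicator {a<..b} r *\<^sub>R alpha (phi r x) \<partial>lborel)"
    unfolding J_def set_lebesgue_integral_def ..
  also have "\<dots> = (\<integral>r. indicator {a<..b} r *\<^sub>R alpha (phi r x) \<partial>(distr lborel borel ((+) a)))"
    by (simp add: lborel_distr_plus)
  also have "\<dots> = (\<integral>r. indicator {a<..b} (a + r) *\<^sub>R alpha (phi (a + r) x) \<partial>lborel)"
    by (rule integral_distr) (use r_meas[OF assms] in auto)
  also have "\<dots> = (\<integral>r. indicator {0<..b-a} r *\<^sub>R alpha (phi r (phi a x)) \<partial>lborel)"
  proof (rule Bochner_Integration.integral_cong)
    fix r
    have "indicator {a<..b} (a + r) = (indicator {0<..b-a} r :: real)" by (simp add: indicator_def algebra_simps)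
    then show "indicator {a<..b} (a + r) *\<^sub>R alpha (phi (a + r) x) = indicator {0<..b-a} r *\<^sub>R alpha (phi r (phi a x))"
      by (simp only: flow_add[OF assms])
  qed simp
  finally show ?thesis unfolding J_def set_lebesgue_integral_def .
qed

lemma J_bounds: assumes "x \<in> space M" "a \<le> b" shows "(b - a) / K \<le> J x a b \<and> J x a b \<le> K * (b - a)"
proof
  have "(LBINT r:{a<..b}. (1/K)) \<le> J x a b" unfolding J_def
    by (rule set_integral_mono) (use set_int[OF assms(1)] set_int_const a_bounds[OF assms(1)] in auto)
  then show "(b - a) / K \<le> J x a b" using assms by (simp add: set_integral_const_Ioc)
  have "J x a b \<le> (LBINT r:{a<..b}. K)" unfolding J_def
    by (rule set_integral_mono) (use set_int[OF assms(1)] set_int_const a_bounds[OF assms(1)] in auto)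
  then show "J x a b \<le> K * (b - a)" using assms by (simp add: set_integral_const_Ioc)
qed

abbreviation X where "X x t \<equiv> xi phi alpha x t"

lemma xi_add: assumes "x \<in> space M" "0 \<le> s" "0 \<le> t"
  shows "X x (s + t) = X x s + X (phi s x) t"
proof -
  have "X x (s + t) = J x 0 (s + t)" using assms by (simp add: xi_J)
  also have "\<dots> = J x 0 s + J x s (s + t)" using assms by (intro J_split) auto
  also have "J x s (s + t) = J (phi s x) 0 t" using J_shift[OF assms(1)] by simp
  finally show ?thesis using assms by (simp add: xi_J)
qed

lemma xi_bounds: assumes "x \<in> space M" "0 \<le> t" shows "t / K \<le> X x t \<and> X x t \<le> K * t"
  using J_bounds[OF assms(1) assms(2)] assms by (simp add: xi_J)

lemma xi_diff_bounds: assumes "x \<in> space M" "0 \<le> s" "s \<le> t"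
  shows "(t - s) / K \<le> X x t - X x s \<and> X x t - X x s \<le> K * (t - s)"
proof -
  have "X x t = X x (s + (t - s))" by simp
  also have "\<dots> = X x s + X (phi s x) (t - s)" using assms by (intro xi_add) auto
  finally show ?thesis using xi_bounds[OF phi_space[OF assms(1)], of "t - s" s] assms by simp
qed

lemma xi_nonpos: assumes "x \<in> space M" "t \<le> 0" shows "X x t \<le> 0"
proof -
  have "X x t = - (LBINT r=t..0. alpha (phi r x))"
    unfolding xi_def by (rule interval_integral_endpoints_reverse)
  also have "(LBINT r=t..0. alpha (phi r x)) = J x t 0"
    unfolding J_def using interval_integral_Ioc[of t 0] assms by (simp add: zero_ereal_def)
  moreover have "0 \<le> (0 - t) / K" using assms K_gt by (simp add: divide_nonpos_pos)
  ultimately show ?thesis using J_bounds[OF assms(1) assms(2)] by linarith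
qed

lemma xi_zero: "x \<in> space M \<Longrightarrow> X x 0 = 0"
  using xi_bounds[of x 0] by simp

lemma xi_mono_lip: assumes "x \<in> space M" "0 \<le> s" "s \<le> t"
  shows "0 \<le> X x t - X x s \<and> X x t - X x s \<le> K * (t - s)"
proof -
  have "0 \<le> (t - s) / K" using assms K_gt by simp
  then show ?thesis using xi_diff_bounds[OF assms] by linarith
qed

lemma xi_lip: assumes "x \<in> space M" shows "K-lipschitz_on {0..} (X x)"
proof (rule lipschitz_onI)
  fix s t :: real assume st: "s \<in> {0..}" "t \<in> {0..}"
  show "dist (X x s) (X x t) \<le> K * dist s t"
  proof (cases "s \<le> t")
    case True
    then have "0 \<le> X x t - X x s \<and> X x t - X x s \<le> K * (t - s)" using xi_mono_lip[OF assms, of s t] st by auto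
    then show ?thesis using True by (simp add: dist_real_def)
  next
    case False
    then have "0 \<le> X x s - X x t \<and> X x s - X x t \<le> K * (s - t)" using xi_mono_lip[OF assms, of t s] st by auto
    then show ?thesis using False by (simp add: dist_real_def)
  qed
qed (use K_gt in simp)

lemma xi_cont: assumes "x \<in> space M" shows "continuous_on {0..b} (X x)"
proof (rule continuous_on_subset[OF lipschitz_on_continuous_on[OF xi_lip[OF assms]]])
  show "{0..b} \<subseteq> {0..}" by auto
qed

lemma w_char: assumes "x \<in> space M" "0 < t"
  shows "0 \<le> w_inv phi alpha x t \<and> X x (w_inv phi alpha x t) = t"
proof -
  have "X x 0 \<le> t" using xi_zero[OF assms(1)] assms by simp
  moreover have "t \<le> X x (K * t)" using xi_bounds[OF assms(1), of "K * t"] assms K_gt by simp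
  moreover have "0 \<le> K * t" using assms K_gt by simp
  ultimately have "\<exists>s. 0 \<le> s \<and> s \<le> K * t \<and> X x s = t"
    by (intro IVT'[of "X x" 0 t "K * t", OF _ _ _ xi_cont[OF assms(1)]])
  then obtain s where s: "0 \<le> s" "s \<le> K * t" "X x s = t" by blast
  have uniq: "s' = s" if "X x s' = t" for s'
  proof -
    have "0 < s'"
    proof (rule ccontr)
      assume "\<not> 0 < s'"
      then have "X x s' \<le> 0" by (intro xi_nonpos[OF assms(1)]) simp
      then show False using that assms(2) by simp
    qed
    show ?thesis
    proof (rule ccontr)
      assume "s' \<noteq> s"
      then consider "s' < s" | "s < s'" by linarith
      then show False
      proof cases
        case 1
        have "0 < (s - s') / K" using 1 K_gt by simp
        then show False using xi_diff_bounds[OF assms(1), of s' s] \<open>0 < s'\<close> that s 1 by linarith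
      next
        case 2
        have "0 < (s' - s) / K" using 2 K_gt by simp
        then show False using xi_diff_bounds[OF assms(1), of s s'] that s 2 by linarith
      qed
    qed
  qed
  have "w_inv phi alpha x t = s" unfolding w_inv_def
  proof (rule the_equality)
    show "X x s = t" by (rule s(3))
  qed (rule uniq)
  then show ?thesis using s by simp
qed

end



context tc begin

lemma Mprob: "prob_space M" by (rule prob)

lemma pb: assumes "\<And>x. x \<in> space M \<Longrightarrow> \<bar>h x\<bar> \<le> b" shows "\<bar>\<integral>x. h x \<partial>M\<bar> \<le> (b::real)"
proof -
  interpret prob_space M by (rule prob)
  obtain x0 where "x0 \<in> space M" using not_empty by blast
  then have b0: "0 \<le> b" using assms[of x0] by linarith
  have "\<bar>\<integral>x. h x \<partial>M\<bar> \<le> (\<integral>x. norm (h x) \<partial>M)" using integral_norm_bound[of M h] by simp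
  also have "\<dots> \<le> (\<integral>x. b \<partial>M)"
    by (rule integral_mono') (use assms b0 in auto)
  also have "\<dots> = b" by (simp add: prob_space)
  finally show ?thesis .
qed

lemma sib: fixes F :: "real \<Rightarrow> real" assumes "\<And>r. r \<in> {0<..1} \<Longrightarrow> \<bar>F r\<bar> \<le> (b::real)" shows "\<bar>LBINT r:{0<..1}. F r\<bar> \<le> b"
proof -
  have "\<bar>F 1\<bar> \<le> b" by (rule assms) simp
  then have b0: "0 \<le> b" by linarith
  have "\<bar>LBINT r:{0<..1}. F r\<bar> \<le> (\<integral>r. norm (indicator {0<..1::real} r *\<^sub>R F r) \<partial>lborel)"
    unfolding set_lebesgue_integral_def using integral_norm_bound[of lborel] by (metis real_norm_def)
  also have "\<dots> \<le> (\<integral>r. indicator {0<..1::real} r *\<^sub>R b \<partial>lborel)"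
  proof (rule integral_mono')
    show "integrable lborel (\<lambda>r. indicator {0<..1::real} r *\<^sub>R b)"
      using set_int_const[of 0 1 b] unfolding set_integrable_def .
  qed (use assms b0 in \<open>auto simp: indicator_def\<close>)
  also have "\<dots> = b" using set_integral_const_Ioc[of 0 1 b] unfolding set_lebesgue_integral_def by simp
  finally show ?thesis .
qed

lemma inv: fixes F :: "'a \<Rightarrow> real" assumes "F \<in> borel_measurable M" shows "(\<integral>x. F (phi s x) \<partial>M) = (\<integral>x. F x \<partial>M)"
proof -
  have "(\<integral>x. F x \<partial>M) = integral\<^sup>L (distr M M (phi s)) F" by (simp add: phi_distr)
  also have "\<dots> = (\<integral>x. F (phi s x) \<partial>M)" by (rule integral_distr[OF phi_meas assms])
  finally show ?thesis by simp
qed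

lemma fub:
  fixes G :: "'a \<Rightarrow> real \<Rightarrow> real"
  assumes Gm: "(\<lambda>(x, r). G x r) \<in> borel_measurable (M \<Otimes>\<^sub>M lborel)"
    and Gb: "\<And>x r. x \<in> space M \<Longrightarrow> \<bar>G x r\<bar> \<le> c"
  shows "(\<integral>x. (LBINT r:{0<..1}. G x r) \<partial>M) = (LBINT r:{0<..1}. (\<integral>x. G x r \<partial>M))"
proof -
  interpret prob_space M by (rule prob)
  interpret pair_sigma_finite M lborel ..
  let ?H = "\<lambda>x r. indicator {0<..1::real} r *\<^sub>R G x r"
  have Hm: "(\<lambda>(x, r). ?H x r) \<in> borel_measurable (M \<Otimes>\<^sub>M lborel)"
  proof -
    have "(\<lambda>p. indicator {0<..1::real} (snd p) *\<^sub>R (\<lambda>(x, r). G x r) p) \<in> borel_measurable (M \<Otimes>\<^sub>M lborel)"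
      using Gm by measurable
    then show ?thesis by (simp add: case_prod_beta')
  qed
  have int: "integrable (M \<Otimes>\<^sub>M lborel) (\<lambda>(x, r). ?H x r)"
  proof (rule integrableI_bounded_set[where A="space M \<times> {0<..1}" and B=c])
    show "space M \<times> {0<..1::real} \<in> sets (M \<Otimes>\<^sub>M lborel)" by auto
    show "emeasure (M \<Otimes>\<^sub>M lborel) (space M \<times> {0<..1::real}) < \<infinity>"
      by (subst lborel.emeasure_pair_measure_Times) (auto simp: emeasure_space_1)
    show "AE p in M \<Otimes>\<^sub>M lborel. p \<in> space M \<times> {0<..1} \<longrightarrow> norm ((\<lambda>(x, r). ?H x r) p) \<le> c"
      by (rule AE_I2) (auto simp: Gb)
    show "AE p in M \<Otimes>\<^sub>M lborel. p \<notin> space M \<times> {0<..1} \<longrightarrow> (\<lambda>(x, r). ?H x r) p = 0"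
      by (rule AE_I2) (auto simp: space_pair_measure indicator_def)
  qed (rule Hm)
  have "(\<integral>r. (\<integral>x. ?H x r \<partial>M) \<partial>lborel) = (\<integral>x. (\<integral>r. ?H x r \<partial>lborel) \<partial>M)"
    by (rule Fubini_integral) (use int in simp)
  moreover have "(\<integral>x. ?H x r \<partial>M) = indicator {0<..1::real} r *\<^sub>R (\<integral>x. G x r \<partial>M)" for r
    by simp
  ultimately show ?thesis unfolding set_lebesgue_integral_def by simp
qed

end



locale tc2 = tc +
  fixes B eta :: real
  assumes B_nn: "0 \<le> B" and eta_pos: "0 < eta"
    and corr: "\<And>u. 1 \<le> u \<Longrightarrow> \<bar>\<integral>x. (alpha (phi u x) - 1) * (alpha x - 1) \<partial>M\<bar> \<le> B * u powr (- eta)"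
begin

definition f where "f x = alpha x - 1"
definition g where "g y = (LBINT r:{0<..1}. f (phi r y))"

lemma f_meas: "f \<in> borel_measurable M"
  unfolding f_def using alpha_meas by measurable

lemma f_bound: "x \<in> space M \<Longrightarrow> \<bar>f x\<bar> \<le> K"
  unfolding f_def using alpha_le[of x] alpha_ge[of x] K_gt
  by (smt (verit) divide_pos_pos)

lemma f_joint: "(\<lambda>(x, r). f (phi (u + r) x)) \<in> borel_measurable (M \<Otimes>\<^sub>M lborel)"
proof -
  have m: "(\<lambda>(x, r::real). (x, u + r)) \<in> measurable (M \<Otimes>\<^sub>M lborel) (M \<Otimes>\<^sub>M lborel)"
    by measurable
  have "(\<lambda>p. alpha ((\<lambda>(x, r). phi r x) ((\<lambda>(x, r::real). (x, u + r)) p)) - 1) \<in> borel_measurable (M \<Otimes>\<^sub>M lborel)"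
    using measurable_compose[OF measurable_compose[OF m flow_meas] alpha_meas] by measurable
  then show ?thesis by (simp add: f_def case_prod_beta')
qed

lemma g_eq: assumes "y \<in> space M" shows "g y = X y 1 - 1"
proof -
  have "g y = (LBINT r:{0<..1}. alpha (phi r y)) - (LBINT r:{0<..1::real}. 1)"
    unfolding g_def f_def
    by (rule set_integral_diff) (use set_int[OF assms] set_int_const in auto)
  then show ?thesis using set_integral_const_Ioc[of 0 1 1] xi_J[of 1 y] unfolding J_def by simp
qed

lemma g_bound: assumes "y \<in> space M" shows "\<bar>g y\<bar> \<le> K"
proof -
  have "1 / K \<le> X y 1 \<and> X y 1 \<le> K" using xi_bounds[OF assms, of 1] by simp
  moreover have "0 < 1 / K" using K_gt by simp
  ultimately show ?thesis using g_eq[OF assms] K_gt by linarith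
qed

lemma g_meas: "g \<in> borel_measurable M"
proof -
  have "(\<lambda>(x, r). indicator {0<..1::real} r *\<^sub>R f (phi (0 + r) x)) \<in> borel_measurable (M \<Otimes>\<^sub>M lborel)"
  proof -
    have "(\<lambda>p. indicator {0<..1::real} (snd p) *\<^sub>R (\<lambda>(x, r). f (phi (0 + r) x)) p) \<in> borel_measurable (M \<Otimes>\<^sub>M lborel)"
      using f_joint[of 0] by measurable
    then show ?thesis by (simp add: case_prod_beta')
  qed
  then have "(\<lambda>x. \<integral>r. indicator {0<..1::real} r *\<^sub>R f (phi (0 + r) x) \<partial>lborel) \<in> borel_measurable M"
    by (rule lborel.borel_measurable_lebesgue_integral)
  then show ?thesis unfolding g_def set_lebesgue_integral_def by simp
qed

lemma g_shift: assumes "x \<in> space M" shows "g (phi u x) = (LBINT r:{0<..1}. f (phi (u + r) x))"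
  unfolding g_def using flow_add[OF assms] by simp

lemma int_mult_set: "(LBINT r:{0<..1::real}. F r) * c = (LBINT r:{0<..1::real}. F r * (c::real))"
proof -
  have "(\<lambda>x. indicator {0<..1::real} x *\<^sub>R (F x * c)) = (\<lambda>x. (indicator {0<..1::real} x *\<^sub>R F x) * c)"
    by (simp add: mult.assoc)
  then show ?thesis unfolding set_lebesgue_integral_def by simp
qed

lemma corr_f: assumes "1 \<le> w" shows "\<bar>\<integral>x. f x * f (phi w x) \<partial>M\<bar> \<le> B * w powr (- eta)"
  using corr[OF assms] unfolding f_def by (simp add: mult.commute)

lemma corr_ff: assumes "0 \<le> s" "s + 1 \<le> v"
  shows "\<bar>\<integral>x. f (phi s x) * f (phi v x) \<partial>M\<bar> \<le> B * (v - s) powr (- eta)"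
proof -
  have "(\<integral>x. f (phi s x) * f (phi v x) \<partial>M) = (\<integral>x. f (phi s x) * f (phi (v - s) (phi s x)) \<partial>M)"
  proof (rule Bochner_Integration.integral_cong)
    fix x assume "x \<in> space M"
    then have "phi (s + (v - s)) x = phi (v - s) (phi s x)" by (rule flow_add)
    then show "f (phi s x) * f (phi v x) = f (phi s x) * f (phi (v - s) (phi s x))" by simp
  qed simp
  also have "\<dots> = (\<integral>x. f x * f (phi (v - s) x) \<partial>M)"
  proof (rule inv)
    show "(\<lambda>x. f x * f (phi (v - s) x)) \<in> borel_measurable M"
      using f_meas measurable_compose[OF phi_meas f_meas] by measurable
  qed
  finally show ?thesis using corr_f[of "v - s"] assms by simp
qed

lemma corr_g: assumes "2 \<le> k"
  shows "\<bar>\<integral>x. g (phi (real k) x) * g x \<partial>M\<bar> \<le> B * (real k - 1) powr (- eta)"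
proof -
  let ?b = "B * (real k - 1) powr (- eta)"
  have step1: "(\<integral>x. g (phi (real k) x) * g x \<partial>M) = (\<integral>x. (LBINT r:{0<..1}. f (phi (real k + r) x) * g x) \<partial>M)"
  proof (rule Bochner_Integration.integral_cong)
    fix x assume x: "x \<in> space M"
    show "g (phi (real k) x) * g x = (LBINT r:{0<..1}. f (phi (real k + r) x) * g x)"
      unfolding g_shift[OF x] by (rule int_mult_set)
  qed (rule refl)
  also have "\<dots> = (LBINT r:{0<..1}. (\<integral>x. f (phi (real k + r) x) * g x \<partial>M))"
  proof (rule fub[where c="K * K"])
    show "(\<lambda>(x, r). f (phi (real k + r) x) * g x) \<in> borel_measurable (M \<Otimes>\<^sub>M lborel)"
    proof -
      have "(\<lambda>p. (\<lambda>(x, r). f (phi (real k + r) x)) p * g (fst p)) \<in> borel_measurable (M \<Otimes>\<^sub>M lborel)"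
        using f_joint[of "real k"] g_meas by measurable
      then show ?thesis by (simp add: case_prod_beta')
    qed
    fix x r assume x: "x \<in> space M"
    have "\<bar>f (phi (real k + r) x)\<bar> \<le> K" by (rule f_bound[OF phi_space[OF x]])
    moreover have "\<bar>g x\<bar> \<le> K" by (rule g_bound[OF x])
    ultimately show "\<bar>f (phi (real k + r) x) * g x\<bar> \<le> K * K"
      by (simp add: abs_mult mult_mono')
  qed
  finally have e: "(\<integral>x. g (phi (real k) x) * g x \<partial>M) = (LBINT r:{0<..1}. (\<integral>x. f (phi (real k + r) x) * g x \<partial>M))" .
  have inner: "\<bar>\<integral>x. f (phi v x) * g x \<partial>M\<bar> \<le> ?b" if v: "real k \<le> v" for v
  proof -
    have "(\<integral>x. f (phi v x) * g x \<partial>M) = (\<integral>x. (LBINT s:{0<..1}. f (phi (0 + s) x) * f (phi v x)) \<partial>M)"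
    proof (rule Bochner_Integration.integral_cong)
      fix x assume x: "x \<in> space M"
      have "f (phi v x) * g x = g x * f (phi v x)" by (rule mult.commute)
      also have "\<dots> = (LBINT s:{0<..1}. f (phi s x) * f (phi v x))" unfolding g_def by (rule int_mult_set)
      finally show "f (phi v x) * g x = (LBINT s:{0<..1}. f (phi (0 + s) x) * f (phi v x))" by simp
    qed (rule refl)
    also have "\<dots> = (LBINT s:{0<..1}. (\<integral>x. f (phi (0 + s) x) * f (phi v x) \<partial>M))"
    proof (rule fub[where c="K * K"])
      show "(\<lambda>(x, s). f (phi (0 + s) x) * f (phi v x)) \<in> borel_measurable (M \<Otimes>\<^sub>M lborel)"
      proof -
        have "(\<lambda>p. (\<lambda>(x, r). f (phi (0 + r) x)) p * f (phi v (fst p))) \<in> borel_measurable (M \<Otimes>\<^sub>M lborel)"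
          using f_joint[of 0] measurable_compose[OF phi_meas f_meas] by measurable
        then show ?thesis by (simp add: case_prod_beta')
      qed
      fix x s assume x: "x \<in> space M"
      have "\<bar>f (phi (0 + s) x)\<bar> \<le> K" by (rule f_bound[OF phi_space[OF x]])
      moreover have "\<bar>f (phi v x)\<bar> \<le> K" by (rule f_bound[OF phi_space[OF x]])
      ultimately show "\<bar>f (phi (0 + s) x) * f (phi v x)\<bar> \<le> K * K"
        by (simp add: abs_mult mult_mono')
    qed
    also have "\<bar>\<dots>\<bar> \<le> ?b"
    proof (rule sib)
      fix s :: real assume s: "s \<in> {0<..1}"
      have k1: "1 \<le> real k - 1" using assms by simp
      have "\<bar>\<integral>x. f (phi s x) * f (phi v x) \<partial>M\<bar> \<le> B * (v - s) powr (- eta)"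
        by (rule corr_ff) (use s v k1 in auto)
      also have "\<dots> \<le> ?b"
      proof (rule mult_left_mono[OF _ B_nn])
        show "(v - s) powr - eta \<le> (real k - 1) powr - eta"
          by (rule powr_mono2') (use s v k1 eta_pos in auto)
      qed
      finally show "\<bar>\<integral>x. f (phi (0 + s) x) * f (phi v x) \<partial>M\<bar> \<le> ?b" by simp
    qed
    finally show ?thesis .
  qed
  show ?thesis unfolding e
  proof (rule sib)
    fix r :: real assume "r \<in> {0<..1}"
    then have "real k \<le> real k + r" by simp
    then show "\<bar>\<integral>x. f (phi (real k + r) x) * g x \<partial>M\<bar> \<le> ?b" by (rule inner)
  qed
qed

end



context tc2 begin

definition Ssum where "Ssum N x = (\<Sum>j<N. g (phi (real j) x))"

lemma gphi_meas: "(\<lambda>x. g (phi t x)) \<in> borel_measurable M"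
  using measurable_compose[OF phi_meas g_meas] .

lemma Ssum_meas: "Ssum N \<in> borel_measurable M"
  unfolding Ssum_def using gphi_meas by measurable

lemma xi_nat: assumes "x \<in> space M" shows "X x (real N) - real N = Ssum N x"
proof (induction N)
  case 0 then show ?case using xi_zero[OF assms] by (simp add: Ssum_def)
next
  case (Suc N)
  have "X x (real (Suc N)) = X x (real N + 1)" by (simp add: add.commute)
  also have "\<dots> = X x (real N) + X (phi (real N) x) 1" by (rule xi_add[OF assms]) auto
  finally show ?case using Suc g_eq[OF phi_space[OF assms], of "real N"] by (simp add: Ssum_def)
qed

definition cc where "cc d = (\<integral>x. g (phi (real d) x) * g x \<partial>M)"

lemma cc_pair: assumes "j \<le> i"
  shows "(\<integral>x. g (phi (real i) x) * g (phi (real j) x) \<partial>M) = cc (i - j)"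
proof -
  have "(\<integral>x. g (phi (real i) x) * g (phi (real j) x) \<partial>M) = (\<integral>x. g (phi (real (i - j)) (phi (real j) x)) * g (phi (real j) x) \<partial>M)"
  proof (rule Bochner_Integration.integral_cong)
    fix x assume x: "x \<in> space M"
    have "phi (real j + real (i - j)) x = phi (real (i - j)) (phi (real j) x)" by (rule flow_add[OF x])
    moreover have "real j + real (i - j) = real i" using assms by simp
    ultimately show "g (phi (real i) x) * g (phi (real j) x) = g (phi (real (i - j)) (phi (real j) x)) * g (phi (real j) x)"
      by simp
  qed (rule refl)
  also have "\<dots> = cc (i - j)" unfolding cc_def
    by (rule inv) (use gphi_meas g_meas in measurable)
  finally show ?thesis .
qed

definition dd :: "nat \<Rightarrow> nat \<Rightarrow> nat" where "dd i j = (if j \<le> i then i - j else j - i)"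

lemma pair_dd: "(\<integral>x. g (phi (real i) x) * g (phi (real j) x) \<partial>M) = cc (dd i j)"
proof (cases "j \<le> i")
  case True then show ?thesis using cc_pair[OF True] by (simp add: dd_def)
next
  case False
  then have "(\<integral>x. g (phi (real i) x) * g (phi (real j) x) \<partial>M) = (\<integral>x. g (phi (real j) x) * g (phi (real i) x) \<partial>M)"
    by (simp add: mult.commute)
  also have "\<dots> = cc (j - i)" using False by (intro cc_pair) simp
  finally show ?thesis using False by (simp add: dd_def)
qed

lemma cc_triv: "\<bar>cc d\<bar> \<le> K * K"
  unfolding cc_def
proof (rule pb)
  fix x assume x: "x \<in> space M"
  have "\<bar>g (phi (real d) x)\<bar> \<le> K" by (rule g_bound[OF phi_space[OF x]])
  moreover have "\<bar>g x\<bar> \<le> K" by (rule g_bound[OF x])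
  ultimately show "\<bar>g (phi (real d) x) * g x\<bar> \<le> K * K" by (simp add: abs_mult mult_mono')
qed

lemma cc_far: assumes "1 \<le> L" "L < d" shows "\<bar>cc d\<bar> \<le> B * real L powr (- eta)"
proof -
  have "\<bar>cc d\<bar> \<le> B * (real d - 1) powr (- eta)" unfolding cc_def by (rule corr_g) (use assms in auto)
  also have "\<dots> \<le> B * real L powr (- eta)"
    by (rule mult_left_mono[OF powr_mono2' B_nn]) (use assms eta_pos in auto)
  finally show ?thesis .
qed

definition bb where "bb L d = (if d \<le> L then K * K else 0) + B * real L powr (- eta)"

lemma cc_bb: assumes "1 \<le> L" shows "\<bar>cc d\<bar> \<le> bb L d"
proof (cases "d \<le> L")
  case True
  have "0 \<le> B * real L powr (- eta)" using B_nn by simp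
  then show ?thesis using cc_triv[of d] True by (simp add: bb_def)
next
  case False then show ?thesis using cc_far[OF assms, of d] by (simp add: bb_def)
qed

lemma card_near: "card {j \<in> {..<N}. dd i j \<le> L} \<le> 2 * L + 1"
proof -
  have "{j \<in> {..<N}. dd i j \<le> L} \<subseteq> {i - L..i + L}" by (auto simp: dd_def)
  then have "card {j \<in> {..<N}. dd i j \<le> L} \<le> card {i - L..i + L}" by (intro card_mono) auto
  also have "\<dots> \<le> 2 * L + 1" by simp
  finally show ?thesis .
qed

lemma row_bound: assumes "1 \<le> L"
  shows "(\<Sum>j<N. bb L (dd i j)) \<le> (2 * real L + 1) * (K * K) + real N * (B * real L powr (- eta))"
proof -
  have "(\<Sum>j<N. bb L (dd i j)) = (\<Sum>j<N. (if dd i j \<le> L then K * K else 0)) + real N * (B * real L powr (- eta))"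
    by (simp add: bb_def sum.distrib)
  also have "(\<Sum>j<N. (if dd i j \<le> L then K * K else 0)) = (\<Sum>j\<in>{j \<in> {..<N}. dd i j \<le> L}. K * K)"
    by (rule sum.inter_filter[symmetric]) simp
  also have "\<dots> = real (card {j \<in> {..<N}. dd i j \<le> L}) * (K * K)" by simp
  also have "\<dots> \<le> (2 * real L + 1) * (K * K)"
  proof (rule mult_right_mono)
    show "real (card {j \<in> {..<N}. dd i j \<le> L}) \<le> 2 * real L + 1" using card_near[of N i L] by linarith
  qed simp
  finally show ?thesis by simp
qed

lemma var_bound: assumes "1 \<le> L"
  shows "(\<integral>x. (Ssum N x)^2 \<partial>M) \<le> real N * ((2 * real L + 1) * (K * K) + real N * (B * real L powr (- eta)))"
proof -
  interpret prob_space M by (rule prob)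
  have intg: "integrable M (\<lambda>x. g (phi (real i) x) * g (phi (real j) x))" for i j
  proof (rule integrable_const_bound[where B="K * K"])
    show "AE x in M. norm (g (phi (real i) x) * g (phi (real j) x)) \<le> K * K"
    proof (rule AE_I2)
      fix x assume x: "x \<in> space M"
      have "\<bar>g (phi (real i) x)\<bar> \<le> K" by (rule g_bound[OF phi_space[OF x]])
      moreover have "\<bar>g (phi (real j) x)\<bar> \<le> K" by (rule g_bound[OF phi_space[OF x]])
      ultimately show "norm (g (phi (real i) x) * g (phi (real j) x)) \<le> K * K" by (simp add: abs_mult mult_mono')
    qed
  qed (use gphi_meas in measurable)
  have "(\<integral>x. (Ssum N x)^2 \<partial>M) = (\<integral>x. (\<Sum>i<N. \<Sum>j<N. g (phi (real i) x) * g (phi (real j) x)) \<partial>M)"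
    unfolding Ssum_def power2_eq_square sum_product ..
  also have "\<dots> = (\<Sum>i<N. \<Sum>j<N. (\<integral>x. g (phi (real i) x) * g (phi (real j) x) \<partial>M))"
    using intg by (simp add: Bochner_Integration.integral_sum)
  also have "\<dots> = (\<Sum>i<N. \<Sum>j<N. cc (dd i j))" by (simp add: pair_dd)
  also have "\<dots> \<le> (\<Sum>i<N. \<Sum>j<N. bb L (dd i j))"
  proof (intro sum_mono)
    fix i j show "cc (dd i j) \<le> bb L (dd i j)" using cc_bb[OF assms, of "dd i j"] by linarith
  qed
  also have "\<dots> \<le> (\<Sum>i<N. (2 * real L + 1) * (K * K) + real N * (B * real L powr (- eta)))"
    by (intro sum_mono row_bound[OF assms])
  also have "\<dots> = real N * ((2 * real L + 1) * (K * K) + real N * (B * real L powr (- eta)))" by simp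
  finally show ?thesis .
qed

lemma cheb: assumes "0 < tau"
  shows "measure M {x \<in> space M. tau \<le> \<bar>Ssum N x\<bar>} \<le> (\<integral>x. (Ssum N x)^2 \<partial>M) / tau^2"
proof -
  interpret prob_space M by (rule prob)
  have intg: "integrable M (\<lambda>x. (Ssum N x)^2)"
  proof (rule integrable_const_bound[where B="(real N * K)^2"])
    show "AE x in M. norm ((Ssum N x)^2) \<le> (real N * K)^2"
    proof (rule AE_I2)
      fix x assume x: "x \<in> space M"
      have "\<bar>Ssum N x\<bar> \<le> (\<Sum>j<N. \<bar>g (phi (real j) x)\<bar>)" unfolding Ssum_def by (rule sum_abs)
      also have "\<dots> \<le> (\<Sum>j<N. K)" by (intro sum_mono g_bound phi_space x)
      finally have "\<bar>Ssum N x\<bar> \<le> real N * K" by simp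
      then have "\<bar>Ssum N x\<bar>^2 \<le> (real N * K)^2" by (intro power_mono) auto
      then show "norm ((Ssum N x)^2) \<le> (real N * K)^2" by simp
    qed
  qed (use Ssum_meas in measurable)
  have "{x \<in> space M. tau \<le> \<bar>Ssum N x\<bar>} = {x \<in> space M. tau^2 \<le> (Ssum N x)^2}"
    using assms by (auto simp: abs_le_square_iff[symmetric])
  also have "measure M \<dots> \<le> (\<integral>x. (Ssum N x)^2 \<partial>M) / tau^2"
    by (rule integral_Markov_inequality_measure[OF intg]) (use assms in auto)
  finally show ?thesis .
qed

end




lemma powr_small: fixes n a e :: real
  assumes "0 < a" "0 < e" "1 \<le> n" "(1 / e) powr (1 / a) \<le> n"
  shows "n powr (- a) \<le> e"
proof -
  have "((1 / e) powr (1 / a)) powr a \<le> n powr a"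
    by (rule powr_mono2) (use assms in auto)
  then have "1 / e \<le> n powr a" using assms by (simp add: powr_powr)
  moreover have "0 < n powr a" using assms by simp
  ultimately have "1 / (n powr a) \<le> e" using assms by (simp add: field_simps)
  then show ?thesis by (simp add: powr_minus_divide)
qed

lemma final_ineq: fixes n t p th et c G D tau :: real
  assumes n1: "1 \<le> n" and tn: "n powr p \<le> t" and p1: "1 \<le> p"
    and et: "0 < et" "et \<le> th / 2" "p * et \<le> 1 / 2"
    and c: "0 < c" and G: "0 \<le> G"
    and s1: "n powr (- (p * th / 2)) \<le> c / 2"
    and s2: "G * n powr (- (1 / 2)) \<le> c / 2"
    and tau: "tau \<le> n powr (p * (1 - th))"
    and D: "D \<le> G * n powr (p - 1)"
  shows "tau + D \<le> c * t powr (1 - et)"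
proof -
  have et1: "et < 1" using mult_right_mono[of 1 p et] et p1 by linarith
  let ?P = "n powr (p * (1 - et))"
  have "?P = (n powr p) powr (1 - et)" by (simp add: powr_powr)
  also have "\<dots> \<le> t powr (1 - et)" by (rule powr_mono2) (use et1 tn n1 in auto)
  finally have P: "?P \<le> t powr (1 - et)" .
  have "n powr (p * (1 - th)) = n powr (- (p * th / 2)) * n powr (p - p * th / 2)"
    by (simp add: powr_add[symmetric] algebra_simps)
  also have "\<dots> \<le> (c / 2) * ?P"
  proof (rule mult_mono[OF s1])
    show "n powr (p - p * th / 2) \<le> ?P"
      by (rule powr_mono) (use n1 et p1 in \<open>auto simp: algebra_simps\<close>)
  qed (use c in auto)
  finally have A: "tau \<le> (c / 2) * ?P" using tau by linarith
  have "G * n powr (p - 1) = (G * n powr (- (1 / 2))) * n powr (p - 1 / 2)"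
    by (simp add: powr_add[symmetric] algebra_simps)
  also have "\<dots> \<le> (c / 2) * ?P"
  proof (rule mult_mono[OF s2])
    show "n powr (p - 1 / 2) \<le> ?P"
      by (rule powr_mono) (use n1 et p1 in \<open>auto simp: algebra_simps\<close>)
  qed (use c in auto)
  finally have B: "D \<le> (c / 2) * ?P" using D by linarith
  have "tau + D \<le> c * ?P" using A B by linarith
  also have "\<dots> \<le> c * t powr (1 - et)" using P c by simp
  finally show ?thesis .
qed




lemma pow_gap_nat: "(n + 1)^p - n^p \<le> p * (n + 1::nat)^(p - 1)"
proof (induction p)
  case 0 then show ?case by simp
next
  case (Suc p)
  have "(n + 1)^(Suc p) - n^(Suc p) = (n + 1) * ((n + 1)^p - n^p) + n^p"
  proof -
    have "n^p \<le> (n+1)^p" by (simp add: power_mono)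
    then obtain d where d: "(n+1)^p = n^p + d" using le_iff_add by blast
    have "(n + 1)^(Suc p) = (n + 1) * (n^p + d)" using d by simp
    moreover have "n^(Suc p) = n * n^p" by simp
    ultimately show ?thesis using d by (simp add: algebra_simps)
  qed
  also have "\<dots> \<le> (n + 1) * (p * (n + 1)^(p - 1)) + (n + 1)^p"
    using Suc by (intro add_mono mult_le_mono2 power_mono) auto
  also have "\<dots> = Suc p * (n + 1)^(Suc p - 1)"
    by (cases p) (simp_all add: algebra_simps)
  finally show ?case .
qed

lemma pow_gap_real: assumes "1 \<le> n"
  shows "real ((n + 1)^p) - real (n^p) \<le> real p * 2^(p - 1) * real n^(p - 1)"
proof -
  have le: "n^p \<le> (n + 1)^p" by (simp add: power_mono)
  have "real ((n + 1)^p) - real (n^p) = real ((n + 1)^p - n^p)" using le by (simp add: of_nat_diff)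
  also have "\<dots> \<le> real (p * (n + 1)^(p - 1))" using pow_gap_nat by (simp only: of_nat_le_iff)
  also have "\<dots> \<le> real (p * (2 * n)^(p - 1))"
    using assms by (simp only: of_nat_le_iff) (intro mult_le_mono2 power_mono, auto)
  also have "\<dots> = real p * 2^(p - 1) * real n^(p - 1)" by (simp add: power_mult_distrib)
  finally show ?thesis .
qed




lemma var_arith: fixes nr q K B et d :: real
  assumes n1: "1 \<le> nr" and q1: "1 \<le> q" and d: "0 < d" "d \<le> 1" "d \<le> et" "4 \<le> q * d"
    and K: "0 \<le> K" and B: "0 \<le> B"
  shows "nr powr (2*q) * ((2 * nr powr q + 1) * (K*K) + nr powr (2*q) * (B * (nr powr q) powr (-et)))
           / (nr powr (2*q*(1-d/8)))^2 \<le> (3*K*K + B) / nr^2"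
proof -
  let ?E = "nr powr (4*q - q*d)"
  have pq: "1 \<le> nr powr q" using n1 q1 by (simp add: ge_one_powr_ge_zero)
  have t1: "nr powr (2*q) * ((2 * nr powr q + 1) * (K*K)) \<le> 3*K*K * ?E"
  proof -
    have "nr powr (2*q) * ((2 * nr powr q + 1) * (K*K)) \<le> nr powr (2*q) * ((3 * nr powr q) * (K*K))"
      using pq K by (intro mult_left_mono mult_right_mono) auto
    also have "\<dots> = 3*K*K * nr powr (3*q)" by (simp add: powr_add[symmetric] algebra_simps)
    also have "\<dots> \<le> 3*K*K * ?E"
      using n1 d q1 K by (intro mult_left_mono powr_mono) (auto simp: algebra_simps mult_left_le)
    finally show ?thesis .
  qed
  have t2: "nr powr (2*q) * (nr powr (2*q) * (B * (nr powr q) powr (-et))) \<le> B * ?E"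
  proof -
    have "nr powr (2*q) * (nr powr (2*q) * (B * (nr powr q) powr (-et))) = B * nr powr (4*q - q*et)"
      using n1 by (simp add: powr_powr powr_add[symmetric] algebra_simps)
    also have "\<dots> \<le> B * ?E"
      using n1 d q1 B by (intro mult_left_mono powr_mono) (auto simp: algebra_simps mult_left_mono)
    finally show ?thesis .
  qed
  have V: "nr powr (2*q) * ((2 * nr powr q + 1) * (K*K) + nr powr (2*q) * (B * (nr powr q) powr (-et)))
      \<le> (3*K*K + B) * ?E"
    using t1 t2 by (simp add: distrib_left distrib_right)
  have tau: "(nr powr (2*q*(1-d/8)))^2 = nr powr (4*q - q*d/2)"
    using n1 by (simp add: powr_powr[symmetric] power2_eq_square powr_add[symmetric] algebra_simps)
  have taupos: "0 < nr powr (4*q - q*d/2)" using n1 by simp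
  have Ediv: "?E / nr powr (4*q - q*d/2) = nr powr (- (q*d/2))"
  proof -
    have "?E / nr powr (4*q - q*d/2) = nr powr ((4*q - q*d) - (4*q - q*d/2))"
      by (rule powr_diff[symmetric])
    also have "(4*q - q*d) - (4*q - q*d/2) = - (q*d/2)" by simp
    finally show ?thesis .
  qed
  have "nr powr (2*q) * ((2 * nr powr q + 1) * (K*K) + nr powr (2*q) * (B * (nr powr q) powr (-et)))
           / (nr powr (2*q*(1-d/8)))^2 \<le> (3*K*K + B) * ?E / nr powr (4*q - q*d/2)"
    unfolding tau using V taupos by (intro divide_right_mono) auto
  also have "\<dots> = (3*K*K + B) * nr powr (- (q*d/2))"
    by (simp only: Ediv[symmetric] times_divide_eq_right)
  also have "\<dots> \<le> (3*K*K + B) * nr powr (-2)"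
    using n1 d K B by (intro mult_left_mono powr_mono) auto
  also have "\<dots> = (3*K*K + B) / nr^2"
    using n1 by (simp add: powr_minus_divide powr_realpow divide_inverse)
  finally show ?thesis .
qed


lemma union_bound:
  fixes Bad :: "nat \<Rightarrow> 'a set" and A :: real
  assumes P: "prob_space M" and sets: "\<And>n. Bad n \<in> sets M"
    and pb: "\<And>n. 1 \<le> n \<Longrightarrow> measure M (Bad n) \<le> A / real n ^ 2"
    and A: "0 \<le> A" and n0: "1 \<le> n0"
  shows "measure M (\<Union>i. Bad (i + n0)) \<le> 2 * A / real n0"
proof -
  interpret prob_space M by (rule P)
  define h where "h i = 2 * A / real (i + n0)" for i
  have hlim: "h \<longlonglongrightarrow> 0"
    unfolding h_def using LIMSEQ_ignore_initial_segment[OF lim_const_over_n[of "2 * A"], of n0] by simp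
  have sums: "(\<lambda>i. h i - h (Suc i)) sums (h 0 - 0)" by (rule telescope_sums'[OF hlim])
  have le: "measure M (Bad (i + n0)) \<le> h i - h (Suc i)" for i
  proof -
    let ?n = "real (i + n0)"
    have n1: "1 \<le> ?n" using n0 by simp
    have "measure M (Bad (i + n0)) \<le> A / ?n ^ 2" using pb[of "i + n0"] n0 by simp
    also have "\<dots> = 2 * A / (2 * ?n ^ 2)" by simp
    also have "\<dots> \<le> 2 * A / (?n * (?n + 1))"
    proof (rule divide_left_mono)
      have "1 * ?n \<le> ?n * ?n" using n1 by (intro mult_right_mono) auto
      then show "?n * (?n + 1) \<le> 2 * ?n ^ 2" by (simp add: power2_eq_square algebra_simps)
      show "0 \<le> 2 * A" using A by simp
      show "0 < 2 * ?n ^ 2 * (?n * (?n + 1))" using n1 by simp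
    qed
    also have "\<dots> = h i - h (Suc i)"
    proof -
      have r: "real (Suc i + n0) = ?n + 1" by simp
      have "1 / ?n - 1 / (?n + 1) = 1 / (?n * (?n + 1))" using n1 by (simp add: field_simps)
      then have "2 * A / ?n - 2 * A / (?n + 1) = 2 * A / (?n * (?n + 1))"
        by (metis (no_types, lifting) right_diff_distrib times_divide_eq_right mult.right_neutral)
      then show ?thesis unfolding h_def r by simp
    qed
    finally show ?thesis .
  qed
  have summ: "summable (\<lambda>i. measure M (Bad (i + n0)))"
    by (rule summable_comparison_test[OF _ sums_summable[OF sums]]) (use le in auto)
  have "measure M (\<Union>i. Bad (i + n0)) \<le> (\<Sum>i. measure M (Bad (i + n0)))"
    by (rule finite_measure_subadditive_countably) (use sets summ in auto)
  also have "\<dots> \<le> (\<Sum>i. h i - h (Suc i))"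
    by (rule suminf_le) (use le summ sums_summable[OF sums] in auto)
  also have "\<dots> = h 0" using sums by (simp add: sums_iff)
  finally show ?thesis by (simp add: h_def)
qed




context tc2 begin

lemma bad_prob: assumes q1: "1 \<le> q" and qd: "4 \<le> real q * d" and d: "d = min 1 eta" and n1: "1 \<le> n"
  shows "measure M {x \<in> space M. real n powr (real (2*q) * (1 - d/8)) \<le> \<bar>Ssum (n^(2*q)) x\<bar>}
     \<le> (3*K*K + B) / real n ^ 2"
proof -
  let ?tau = "real n powr (real (2*q) * (1 - d/8))"
  have tpos: "0 < ?tau" using n1 by simp
  have Lq: "1 \<le> n^q" using n1 by simp
  have nr: "0 < real n" using n1 by simp
  have e1: "real (n^(2*q)) = real n powr (2 * real q)"
    using powr_realpow[OF nr, of "2*q"] by simp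
  have e2: "real (n^q) = real n powr real q"
    using powr_realpow[OF nr, of q] by simp
  have e3: "real (2*q) * (1 - d/8) = 2 * real q * (1 - d/8)" by simp
  have dpos: "0 < d" using d eta_pos by simp
  have "measure M {x \<in> space M. ?tau \<le> \<bar>Ssum (n^(2*q)) x\<bar>} \<le> (\<integral>x. (Ssum (n^(2*q)) x)^2 \<partial>M) / ?tau^2"
    by (rule cheb[OF tpos])
  also have "\<dots> \<le> real (n^(2*q)) * ((2 * real (n^q) + 1) * (K * K) + real (n^(2*q)) * (B * real (n^q) powr (- eta))) / ?tau^2"
    by (rule divide_right_mono[OF var_bound[OF Lq]]) simp
  also have "\<dots> = real n powr (2*real q) * ((2 * real n powr real q + 1) * (K*K) + real n powr (2*real q) * (B * (real n powr real q) powr (-eta)))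
           / (real n powr (2*real q*(1-d/8)))^2"
    unfolding e1 e2 e3 ..
  also have "\<dots> \<le> (3*K*K + B) / real n ^ 2"
    by (rule var_arith) (use n1 q1 qd d dpos K_gt B_nn in auto)
  finally show ?thesis .
qed

lemma xi_good:
  fixes p :: nat and th et c t :: real
  assumes x: "x \<in> space M" and n1: "1 \<le> n" and p1: "1 \<le> p"
    and hS: "\<bar>Ssum (n^p) x\<bar> \<le> real n powr (real p * (1 - th))"
    and tn: "real (n ^ p) \<le> t" and tlt: "t \<le> real ((n + 1) ^ p)"
    and th: "0 < th" and et: "0 < et" "et \<le> th / 2" "real p * et \<le> 1 / 2" and c: "0 < c"
    and s1: "real n powr (- (real p * th / 2)) \<le> c / 2"
    and s2: "(K * (real p * 2^(p - 1))) * real n powr (- (1 / 2)) \<le> c / 2"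
  shows "\<bar>X x t - t\<bar> \<le> c * t powr (1 - et)"
proof -
  let ?N = "real (n ^ p)"
  let ?G = "K * (real p * 2^(p - 1))"
  have N0: "0 \<le> ?N" by simp
  have ml: "0 \<le> X x t - X x ?N \<and> X x t - X x ?N \<le> K * (t - ?N)"
    by (rule xi_mono_lip[OF x N0 tn])
  have xn: "X x ?N - ?N = Ssum (n^p) x" using xi_nat[OF x, of "n^p"] by simp
  have main: "\<bar>X x t - t\<bar> \<le> \<bar>Ssum (n^p) x\<bar> + K * (t - ?N)"
  proof -
    have "X x t - t = (X x ?N - ?N) + ((X x t - X x ?N) - (t - ?N))" by simp
    moreover have "\<bar>(X x t - X x ?N) - (t - ?N)\<bar> \<le> K * (t - ?N)"
    proof -
      have "(t - ?N) \<le> K * (t - ?N)" using K_gt tn mult_right_mono[of 1 K "t - ?N"] by simp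
      then show ?thesis using ml tn by (simp add: abs_le_iff)
    qed
    ultimately show ?thesis using xn by (smt (verit))
  qed
  have D: "K * (t - ?N) \<le> ?G * real n powr (real p - 1)"
  proof -
    have "t - ?N \<le> real ((n + 1) ^ p) - real (n ^ p)" using tlt by simp
    also have "\<dots> \<le> real p * 2^(p - 1) * real n^(p - 1)" by (rule pow_gap_real[OF n1])
    also have "real n^(p - 1) = real n powr (real p - 1)"
      using n1 p1 by (simp add: powr_realpow[symmetric] of_nat_diff)
    finally have "t - ?N \<le> real p * 2^(p - 1) * real n powr (real p - 1)" .
    then have "K * (t - ?N) \<le> K * (real p * 2^(p - 1) * real n powr (real p - 1))"
      using K_gt by (intro mult_left_mono) auto
    then show ?thesis by (simp add: mult.assoc)
  qed
  have tn': "real n powr real p \<le> t" using tn n1 by (simp add: powr_realpow)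
  have "\<bar>Ssum (n^p) x\<bar> + K * (t - ?N) \<le> c * t powr (1 - et)"
  proof (rule final_ineq[OF _ tn' _ et c _ s1 s2 hS D])
    show "1 \<le> real n" using n1 by simp
    show "1 \<le> real p" using p1 by simp
    show "0 \<le> ?G" using K_gt by simp
  qed
  then show ?thesis using main by linarith
qed

theorem main_loc:
  "\<exists>eta'::real. 0 < eta' \<and> eta' < 1/4 \<and>
    (\<forall>omega::real > 0. \<exists>Y \<in> sets M. measure M Y \<ge> 1 - omega \<and>
      (\<exists>m::real \<ge> 1. \<forall>x \<in> Y. \<forall>t \<ge> m.
         \<bar>X x t - t\<bar> \<le> K powr (-4) * t powr (1 - eta') \<and>
         \<bar>w_inv phi alpha x t - t\<bar> \<le> K powr (-4) * t powr (1 - eta')))"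
proof -
  interpret prob_space M by (rule prob)
  define d where "d = min 1 eta"
  have d: "0 < d" "d \<le> 1" "d \<le> eta" using eta_pos by (auto simp: d_def)
  define q :: nat where "q = nat \<lceil>4 / d\<rceil>"
  have q4: "4 / d \<le> real q" unfolding q_def by linarith
  have qd: "4 \<le> real q * d" using q4 d by (simp add: field_simps)
  have q1: "1 \<le> q"
  proof -
    have "4 \<le> 4 / d" using d by (simp add: field_simps)
    then show ?thesis using q4 by linarith
  qed
  define p :: nat where "p = 2 * q"
  have p1: "1 \<le> p" using q1 by (simp add: p_def)
  define th where "th = d / 8"
  have th: "0 < th" "th \<le> 1/8" using d by (auto simp: th_def)
  define et where "et = min (th / 2) (1 / (2 * real p))"
  have et: "0 < et" "et \<le> th / 2" "real p * et \<le> 1 / 2"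
  proof -
    show "0 < et" using th p1 by (simp add: et_def)
    show "et \<le> th / 2" by (simp add: et_def)
    have "et \<le> 1 / (2 * real p)" by (simp add: et_def)
    then have "real p * et \<le> real p * (1 / (2 * real p))" by (intro mult_left_mono) auto
    also have "\<dots> = 1 / 2" using p1 by simp
    finally show "real p * et \<le> 1 / 2" .
  qed
  have et4: "et < 1/4" using et th by linarith
  define A where "A = 3*K*K + B"
  have A0: "0 \<le> A" using B_nn by (simp add: A_def)
  define Bad where "Bad n = {x \<in> space M. real n powr (real p * (1 - th)) \<le> \<bar>Ssum (n^p) x\<bar>}" for n
  have Bad_sets: "Bad n \<in> sets M" for n
    unfolding Bad_def using Ssum_meas[of "n^p"] by measurable
  have Bad_prob: "measure M (Bad n) \<le> A / real n ^ 2" if "1 \<le> n" for n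
    using bad_prob[OF q1 qd d_def that] unfolding Bad_def A_def p_def th_def by simp
  define c where "c = K powr (-5)"
  have c0: "0 < c" using K_gt by (simp add: c_def)
  define G where "G = K * (real p * 2^(p - 1))"
  have G0: "0 < G" using K_gt p1 by (simp add: G_def)
  define n1 :: nat where "n1 = nat \<lceil>max ((1 / (c / 2)) powr (1 / (real p * th / 2))) ((1 / (c / (2 * G))) powr (1 / (1 / 2)))\<rceil> + 1"
  have n1_1: "1 \<le> n1" by (simp add: n1_def)
  have asym: "real n powr (- (real p * th / 2)) \<le> c / 2 \<and> G * real n powr (- (1 / 2)) \<le> c / 2"
    if nn: "n1 \<le> n" for n :: nat
  proof -
    have n1r: "1 \<le> real n" using nn n1_1 by simp
    have big: "max ((1 / (c / 2)) powr (1 / (real p * th / 2))) ((1 / (c / (2 * G))) powr (1 / (1 / 2))) \<le> real n"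
    proof -
      have "max ((1 / (c / 2)) powr (1 / (real p * th / 2))) ((1 / (c / (2 * G))) powr (1 / (1 / 2))) \<le> real n1"
        unfolding n1_def by linarith
      also have "\<dots> \<le> real n" using nn by simp
      finally show ?thesis .
    qed
    have "real n powr (- (real p * th / 2)) \<le> c / 2"
      by (rule powr_small) (use th p1 c0 n1r big in auto)
    moreover have "real n powr (- (1 / 2)) \<le> c / (2 * G)"
      by (rule powr_small) (use c0 G0 n1r big in auto)
    then have "G * real n powr (- (1 / 2)) \<le> c / 2" using G0 by (simp add: field_simps)
    ultimately show ?thesis by simp
  qed
  show ?thesis
  proof (intro exI conjI allI impI)
    show "0 < et" by (rule et(1))
    show "et < 1/4" by (rule et4)
    fix omega :: real assume om: "0 < omega"
    define n0 :: nat where "n0 = nat \<lceil>2 * A / omega\<rceil> + 1"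
    have n0_1: "1 \<le> n0" by (simp add: n0_def)
    have n0_big: "2 * A / omega \<le> real n0" unfolding n0_def by linarith
    define U where "U = (\<Union>i. Bad (i + n0))"
    have U_sets: "U \<in> sets M" unfolding U_def using Bad_sets by auto
    have U_meas: "measure M U \<le> 2 * A / real n0"
      unfolding U_def by (rule union_bound[OF prob Bad_sets Bad_prob A0 n0_1])
    have "2 * A / real n0 \<le> omega"
      using n0_big om n0_1 by (simp add: field_simps)
    define Y where "Y = space M - U"
    have Y_sets: "Y \<in> sets M" unfolding Y_def using U_sets by auto
    have Y_meas: "1 - omega \<le> measure M Y"
      unfolding Y_def using prob_compl[OF U_sets] U_meas \<open>2 * A / real n0 \<le> omega\<close> by linarith
    define N0 where "N0 = max n0 n1"
    have N0_1: "1 \<le> N0" using n0_1 by (simp add: N0_def)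
    define m' where "m' = real N0 ^ p"
    have m'1: "1 \<le> m'" using N0_1 unfolding m'_def by simp
    have good: "\<bar>X x t - t\<bar> \<le> c * t powr (1 - et)" if x: "x \<in> Y" and tm: "m' \<le> t" for x t
    proof -
      have xs: "x \<in> space M" using x by (simp add: Y_def)
      have t0: "0 \<le> t" using tm m'1 by linarith
      have pp: "0 < p" using p1 by simp
      define n where "n = nat \<lfloor>root p t\<rfloor>"
      have rt0: "0 \<le> root p t" using t0 by (rule real_root_ge_zero)
      have rN: "real N0 \<le> root p t"
      proof -
        have "root p m' = real N0" unfolding m'_def using pp by (simp add: real_root_power_cancel)
        moreover have "root p m' \<le> root p t" using tm pp by (simp add: real_root_le_iff)
        ultimately show ?thesis by simp
      qed
      have nle: "real n \<le> root p t" unfolding n_def using rt0 by linarith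
      have nlt: "root p t < real n + 1" unfolding n_def using rt0 by linarith
      have nN: "N0 \<le> n" unfolding n_def using rN by (simp add: le_nat_floor)
      have n1': "1 \<le> n" using nN N0_1 by simp
      have tn: "real (n ^ p) \<le> t"
      proof -
        have "real n ^ p \<le> root p t ^ p" by (rule power_mono[OF nle]) simp
        also have "\<dots> = t" using pp t0 by (simp add: real_root_pow_pos2)
        finally show ?thesis by simp
      qed
      have tlt: "t \<le> real ((n + 1) ^ p)"
      proof -
        have "t = root p t ^ p" using pp t0 by (simp add: real_root_pow_pos2)
        also have "\<dots> \<le> (real n + 1) ^ p" by (rule power_mono) (use nlt rt0 in auto)
        finally show ?thesis by (simp add: add.commute)
      qed
      have notbad: "x \<notin> Bad n"
      proof
        assume "x \<in> Bad n"
        moreover have "n = (n - n0) + n0" using nN by (simp add: N0_def)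
        ultimately have "x \<in> U" unfolding U_def by (metis UNIV_I UN_I)
        then show False using x by (simp add: Y_def)
      qed
      have hS: "\<bar>Ssum (n^p) x\<bar> \<le> real n powr (real p * (1 - th))"
        using notbad xs unfolding Bad_def by auto
      have nn1: "n1 \<le> n" using nN by (simp add: N0_def)
      show ?thesis
        by (rule xi_good[OF xs n1' p1 hS tn tlt th(1) et c0])
           (use asym[OF nn1] in \<open>simp_all add: G_def\<close>)
    qed
    show "\<exists>Y\<in>sets M. 1 - omega \<le> measure M Y \<and>
      (\<exists>m\<ge>1. \<forall>x\<in>Y. \<forall>t\<ge>m. \<bar>X x t - t\<bar> \<le> K powr - 4 * t powr (1 - et) \<and>
         \<bar>w_inv phi alpha x t - t\<bar> \<le> K powr - 4 * t powr (1 - et))"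
    proof (intro bexI conjI exI allI impI ballI)
      show "Y \<in> sets M" by (rule Y_sets)
      show "1 - omega \<le> measure M Y" by (rule Y_meas)
      show "1 \<le> K * m'" using K_gt m'1 by (smt (verit) mult_le_cancel_right1)
      fix x t assume x: "x \<in> Y" and tm: "K * m' \<le> t"
      have xs: "x \<in> space M" using x by (simp add: Y_def)
      have m't: "m' \<le> t" using tm K_gt m'1 by (smt (verit) mult_le_cancel_right1)
      have t0: "0 < t" using m't m'1 by linarith
      have cK: "c \<le> K powr (-4)" unfolding c_def using K_gt by (intro powr_mono) auto
      have tpos: "0 \<le> t powr (1 - et)" by simp
      show "\<bar>X x t - t\<bar> \<le> K powr - 4 * t powr (1 - et)"
        using good[OF x m't] mult_right_mono[OF cK tpos] by linarith
      define s where "s = w_inv phi alpha x t"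
      have s: "0 \<le> s" "X x s = t" using w_char[OF xs t0] by (auto simp: s_def)
      have sb: "s / K \<le> t \<and> t \<le> K * s" using xi_bounds[OF xs s(1)] s(2) by simp
      have sK: "s \<le> K * t" using sb K_gt by (simp add: field_simps)
      have ms: "m' \<le> s"
      proof -
        have "K * m' \<le> K * s" using tm sb by linarith
        then show ?thesis using K_gt by simp
      qed
      have "\<bar>w_inv phi alpha x t - t\<bar> = \<bar>X x s - s\<bar>" using s by (simp add: s_def abs_minus_commute)
      also have "\<dots> \<le> c * s powr (1 - et)" by (rule good[OF x ms])
      also have "\<dots> \<le> c * (K * t) powr (1 - et)"
        using s(1) sK et et4 c0 by (intro mult_left_mono powr_mono2) auto
      also have "(K * t) powr (1 - et) = K powr (1 - et) * t powr (1 - et)"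
        using K_gt t0 by (simp add: powr_mult)
      also have "K powr (1 - et) \<le> K powr 1" using K_gt et by (intro powr_mono) auto
      then have "c * (K powr (1 - et) * t powr (1 - et)) \<le> c * (K powr 1 * t powr (1 - et))"
        using c0 tpos by (intro mult_left_mono mult_right_mono) auto
      also have "c * (K powr 1 * t powr (1 - et)) = K powr (-4) * t powr (1 - et)"
      proof -
        have "K powr (-5) * K powr 1 = K powr (-5 + 1)" by (rule powr_add[symmetric])
        then have "K powr (-5) * K powr 1 = K powr (-4)" by simp
        then show ?thesis unfolding c_def by (simp only: mult.assoc[symmetric])
      qed
      finally show "\<bar>w_inv phi alpha x t - t\<bar> \<le> K powr - 4 * t powr (1 - et)" .
    qed
  qed
qed

end



theorem corollary2p7:
  fixes M :: "'a measure"
    and phi :: "real \<Rightarrow> 'a \<Rightarrow> 'a"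
    and S :: "('a \<Rightarrow> real) \<Rightarrow> ennreal"
    and C eta_t :: real
    and alpha :: "'a \<Rightarrow> real"
  assumes prob: "prob_space M"
    (* the unipotent flow: a jointly measurable, measure preserving flow *)
    and flow_meas: "(\<lambda>(x, t). phi t x) \<in> measurable (M \<Otimes>\<^sub>M lborel) M"
    and flow_pres: "\<And>t. phi t \<in> M \<rightarrow>\<^sub>M M \<and> distr M M (phi t) = M"
    and flow_zero: "\<And>x. x \<in> space M \<Longrightarrow> phi 0 x = x"
    and flow_add: "\<And>s t x. x \<in> space M \<Longrightarrow> phi (s + t) x = phi t (phi s x)"
    (* the Sobolev norm S *)
    and S_sup: "\<And>f x. x \<in> space M \<Longrightarrow> ennreal \<bar>f x\<bar> \<le> S f"
    and S_triangle: "\<And>f g. S (\<lambda>x. f x + g x) \<le> S f + S g"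
    and S_scale: "\<And>c f. S (\<lambda>x. c * f x) = ennreal \<bar>c\<bar> * S f"
    and S_const: "S (\<lambda>x. 1) < \<infinity>"
    (* strong spectral gap: polynomial decay of correlations *)
    and C_pos: "C > 0" and eta_t_pos: "eta_t > 0"
    and mixing: "\<And>f g t. f \<in> borel_measurable M \<Longrightarrow> g \<in> borel_measurable M \<Longrightarrow>
        S f < \<infinity> \<Longrightarrow> S g < \<infinity> \<Longrightarrow>
        (\<integral>x. f x \<partial>M) = 0 \<Longrightarrow> (\<integral>x. g x \<partial>M) = 0 \<Longrightarrow> t \<ge> 1 \<Longrightarrow>
        \<bar>\<integral>x. f (phi t x) * g x \<partial>M\<bar> \<le> C * enn2real (S f) * enn2real (S g) * t powr (- eta_t)"
    (* alpha is a good time-change function *)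
    and alpha_meas: "alpha \<in> borel_measurable M"
    and alpha_pos: "\<And>x. x \<in> space M \<Longrightarrow> alpha x > 0"
    and alpha_bdd: "bdd_above ((\<lambda>x. max (alpha x) (1 / alpha x)) ` space M)"
    and alpha_C: "C_alpha M alpha > 1"
    and alpha_int: "(\<integral>x. alpha x \<partial>M) = 1"
    and alpha_S: "S alpha < \<infinity>"
  shows "\<exists>eta::real. 0 < eta \<and> eta < 1/4 \<and>
    (\<forall>omega::real > 0. \<exists>Y \<in> sets M. measure M Y \<ge> 1 - omega \<and>
      (\<exists>m::real \<ge> 1. \<forall>x \<in> Y. \<forall>t \<ge> m.
         \<bar>xi phi alpha x t - t\<bar> \<le> C_alpha M alpha powr (-4) * t powr (1 - eta) \<and>
         \<bar>w_inv phi alpha x t - t\<bar> \<le> C_alpha M alpha powr (-4) * t powr (1 - eta)))"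
  proof -
  define K where "K = C_alpha M alpha"
  interpret P: prob_space M by (rule prob)
  have K1: "1 < K" using alpha_C by (simp add: K_def)
  have upper: "max (alpha x) (1 / alpha x) \<le> K" if "x \<in> space M" for x
    unfolding K_def C_alpha_def by (rule cSUP_upper[OF that alpha_bdd])
  have ale: "alpha x \<le> K" if "x \<in> space M" for x using upper[OF that] by simp
  have age: "1 / K \<le> alpha x" if x: "x \<in> space M" for x
  proof -
    have "1 / alpha x \<le> K" using upper[OF x] by simp
    then have "1 \<le> K * alpha x" using alpha_pos[OF x] by (simp add: field_simps)
    then show ?thesis using K1 by (simp add: field_simps)
  qed
  define f where "f x = alpha x - 1" for x
  have f_meas: "f \<in> borel_measurable M" unfolding f_def using alpha_meas by measurable
  have Sf: "S f < \<infinity>"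
  proof -
    have tri: "S (\<lambda>x. alpha x + (- 1) * 1) \<le> S alpha + S (\<lambda>x. (- 1) * 1)"
      by (rule S_triangle)
    have sc: "S (\<lambda>x. (- 1) * 1) = ennreal \<bar>- 1\<bar> * S (\<lambda>x. 1)"
      by (rule S_scale)
    have eq: "(\<lambda>x. alpha x + (- 1) * 1) = f" by (simp add: f_def fun_eq_iff)
    have "S f \<le> S alpha + S (\<lambda>x. 1)" using tri unfolding eq sc by simp
    also have "\<dots> < \<infinity>" using alpha_S S_const by (simp add: ennreal_add_less_top)
    finally show ?thesis .
  qed
  have aint: "integrable M alpha"
  proof (rule P.integrable_const_bound[where B=K])
    show "AE x in M. norm (alpha x) \<le> K"
    proof (rule AE_I2)
      fix x assume x: "x \<in> space M"
      show "norm (alpha x) \<le> K" using ale[OF x] alpha_pos[OF x] by simp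
    qed
  qed (rule alpha_meas)
  have f0: "(\<integral>x. f x \<partial>M) = 0"
    unfolding f_def using aint alpha_int by (simp add: Bochner_Integration.integral_diff P.prob_space)
  define B where "B = C * enn2real (S f) * enn2real (S f)"
  have B0: "0 \<le> B" using C_pos by (simp add: B_def)
  interpret tc2 M phi alpha K B eta_t
  proof (intro tc2.intro tc.intro tc2_axioms.intro)
    show "prob_space M" by (rule prob)
    show "(\<lambda>(x, t). phi t x) \<in> M \<Otimes>\<^sub>M lborel \<rightarrow>\<^sub>M M" by (rule flow_meas)
    show "\<And>t. phi t \<in> M \<rightarrow>\<^sub>M M \<and> distr M M (phi t) = M" by (rule flow_pres)
    show "\<And>s t x. x \<in> space M \<Longrightarrow> phi (s + t) x = phi t (phi s x)" by (rule flow_add)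
    show "alpha \<in> borel_measurable M" by (rule alpha_meas)
    show "1 < K" by (rule K1)
    show "\<And>x. x \<in> space M \<Longrightarrow> alpha x \<le> K" by (rule ale)
    show "\<And>x. x \<in> space M \<Longrightarrow> 1 / K \<le> alpha x" by (rule age)
    show "0 \<le> B" by (rule B0)
    show "0 < eta_t" by (rule eta_t_pos)
    fix u :: real assume u: "1 \<le> u"
    have "\<bar>\<integral>x. f (phi u x) * f x \<partial>M\<bar> \<le> C * enn2real (S f) * enn2real (S f) * u powr (- eta_t)"
      by (rule mixing[OF f_meas f_meas Sf Sf f0 f0 u])
    then show "\<bar>\<integral>x. (alpha (phi u x) - 1) * (alpha x - 1) \<partial>M\<bar> \<le> B * u powr (- eta_t)"
      by (simp add: f_def B_def)
  qed
  show ?thesis using main_loc unfolding K_def .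
qed


end
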